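(* Let $\mathcal Q$ be a question space, $\mathcal A$ an answer space, $p_0$ a distribution on $\mathcal Q$, and let the reward be binary, $s:\mathcal Q\times\mathcal A\to\{0,1\}$ ($s=1$ meaning a correct answer), with acceptance of a pair $(q,a)$ meaning $s(q,a)=1$. Let $\Pi$ be a finite class of conditional answer distributions $\pi_\theta(\cdot\mid q)$. Run iterative self-improvement from an initial model $\hat\theta_0$: at each iteration $t=0,1,2,\dots$, sample $n$ questions $q\sim p_0$ i.i.d., generate one answer $a\sim\pi_{\hat\theta_t}(\cdot\mid q)$ per question, keep the $n_t\le n$ pairs with $s(q,a)=1$, and set $\hat\theta_{t+1}$ to be the empirical maximum likelihood estimator over $\Pi$ on the kept pairs, i.e. $\hat\theta_{t+1}=\arg\max_{\theta:\pi_\theta\in\Pi}\frac1{n_t}\sum_{i=1}^{n_t}\log\pi_\theta(a_i\mid q_i)$. Assume at every iteration the conditional answer distribution $a\mapsto\pi_{\hat\theta_t}(a\mid q)\mathbf 1_{\{s(q,a)=1\}}/\alpha(\hat\theta_t,q)$ belongs to $\Pi$, and that all models lie in a neighborhood $\Theta$ of the pretrained initialization for which the following holds: there exist constants $c\in(0,1)$ and $\gamma\ge 0$ such that for every question distribution $p$ and every $\theta\in\Theta$, \[ \Pr_{q\sim p}\big[\alpha(\theta,q)<c\,V_p(\theta)\big]\le\gamma. \] Let $\nu:=\sqrt{1/n}$, $c_\delta:=\sqrt{2\log(|\Pi|\delta^{-1})}$, $c_{\delta'}:=\sqrt{\log(\delta'^{-1})/2}$ for $\delta,\delta'\in(0,1)$,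 and define on its natural domain $x>c_{\delta'}\nu$ \[ F(x):=1-\gamma-\frac{c_\delta\,\nu}{c\sqrt{x-c_{\delta'}\nu}}. \] Then, with probability at least $1-\delta-\delta'$, $V_{p_0}(\hat\theta_{t+1})\ge F\big(V_{p_0}(\hat\theta_t)\big)$. Moreover, with probability at least $1-t(\delta+\delta')$, \[ V_{p_0}(\hat\theta_t)\ge F^{\circ t}\big(V_{p_0}(\hat\theta_0)\big), \] where $F^{\circ t}$ denotes the $t$-fold composition of $F$.
   Context: Per-question acceptance rate: $\alpha(\theta,q):=\Pr_{a\sim\pi_\theta(\cdot\mid q)}[s(q,a)=1]$, assumed positive. Expected reward: $V_p(\theta):=\mathbb E_{q\sim p,\,a\sim\pi_\theta(\cdot\mid q)}[s(q,a)]$. Probabilities are over the random sampling of questions and answers across iterations. *)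

theory Defs
  imports "HOL-Probability.Probability"
begin

text \<open>Models are identified with their conditional answer distributions
  \<pi> :: 'q \<Rightarrow> 'a pmf. The binary reward is the predicate s :: 'q \<Rightarrow> 'a \<Rightarrow> bool
  (s q a = True meaning reward 1).\<close>

definition acc_rate :: "('q \<Rightarrow> 'a \<Rightarrow> bool) \<Rightarrow> ('q \<Rightarrow> 'a pmf) \<Rightarrow> 'q \<Rightarrow> real" where
  "acc_rate s \<pi> q = measure_pmf.prob (\<pi> q) {a. s q a}"

definition exp_reward :: "('q \<Rightarrow> 'a \<Rightarrow> bool) \<Rightarrow> 'q pmf \<Rightarrow> ('q \<Rightarrow> 'a pmf) \<Rightarrow> real" where
  "exp_reward s p \<pi> = measure_pmf.expectation p (\<lambda>q. acc_rate s \<pi> q)"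

definition filtered :: "('q \<Rightarrow> 'a \<Rightarrow> bool) \<Rightarrow> ('q \<Rightarrow> 'a pmf) \<Rightarrow> ('q \<Rightarrow> 'a pmf)" where
  "filtered s \<pi> = (\<lambda>q. cond_pmf (\<pi> q) {a. s q a})"

fun iid_list :: "nat \<Rightarrow> 'x pmf \<Rightarrow> 'x list pmf" where
  "iid_list 0 p = return_pmf []"
| "iid_list (Suc n) p = bind_pmf p (\<lambda>x. bind_pmf (iid_list n p) (\<lambda>xs. return_pmf (x # xs)))"

definition pair_dist :: "'q pmf \<Rightarrow> ('q \<Rightarrow> 'a pmf) \<Rightarrow> ('q \<times> 'a) pmf" where
  "pair_dist p0 \<pi> = bind_pmf p0 (\<lambda>q. map_pmf (\<lambda>a. (q, a)) (\<pi> q))"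

definition eln :: "real \<Rightarrow> ereal" where
  "eln x = (if x > 0 then ereal (ln x) else -\<infinity>)"

definition avg_loglik :: "('q \<Rightarrow> 'a pmf) \<Rightarrow> ('q \<times> 'a) list \<Rightarrow> ereal" where
  "avg_loglik \<pi> D = ereal (1 / real (length D)) * sum_list (map (\<lambda>(q, a). eln (pmf (\<pi> q) a)) D)"

definition is_mle_selector :: "('q \<Rightarrow> 'a pmf) set \<Rightarrow> (('q \<times> 'a) list \<Rightarrow> ('q \<Rightarrow> 'a pmf)) \<Rightarrow> bool" where
  "is_mle_selector Mods mle \<longleftrightarrow>
     (\<forall>D. mle D \<in> Mods \<and> (\<forall>\<pi>\<in>Mods. avg_loglik \<pi> D \<le> avg_loglik (mle D) D))"

definition si_step :: "'q pmf \<Rightarrow> ('q \<Rightarrow> 'a \<Rightarrow> bool) \<Rightarrow> nat \<Rightarrow> (('q \<times> 'a) list \<Rightarrow> ('q \<Rightarrow> 'a pmf))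
    \<Rightarrow> ('q \<Rightarrow> 'a pmf) \<Rightarrow> ('q \<Rightarrow> 'a pmf) pmf" where
  "si_step p0 s n mle \<pi> =
     map_pmf (\<lambda>D. mle (filter (\<lambda>(q, a). s q a) D)) (iid_list n (pair_dist p0 \<pi>))"

fun si_iter :: "'q pmf \<Rightarrow> ('q \<Rightarrow> 'a \<Rightarrow> bool) \<Rightarrow> nat \<Rightarrow> (('q \<times> 'a) list \<Rightarrow> ('q \<Rightarrow> 'a pmf))
    \<Rightarrow> ('q \<Rightarrow> 'a pmf) \<Rightarrow> nat \<Rightarrow> ('q \<Rightarrow> 'a pmf) pmf" where
  "si_iter p0 s n mle \<pi>0 0 = return_pmf \<pi>0"
| "si_iter p0 s n mle \<pi>0 (Suc t) = bind_pmf (si_iter p0 s n mle \<pi>0 t) (si_step p0 s n mle)"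

definition reachable :: "'q pmf \<Rightarrow> ('q \<Rightarrow> 'a \<Rightarrow> bool) \<Rightarrow> nat \<Rightarrow> (('q \<times> 'a) list \<Rightarrow> ('q \<Rightarrow> 'a pmf))
    \<Rightarrow> ('q \<Rightarrow> 'a pmf) \<Rightarrow> ('q \<Rightarrow> 'a pmf) set" where
  "reachable p0 s n mle \<pi>0 = (\<Union>t. set_pmf (si_iter p0 s n mle \<pi>0 t))"

definition nu :: "nat \<Rightarrow> real" where "nu n = sqrt (1 / real n)"
definition c_delta :: "nat \<Rightarrow> real \<Rightarrow> real" where
  "c_delta N \<delta> = sqrt (2 * ln (real N / \<delta>))"
definition c_delta' :: "real \<Rightarrow> real" where
  "c_delta' \<delta>' = sqrt (ln (1 / \<delta>') / 2)"

definition F_map :: "real \<Rightarrow> real \<Rightarrow> real \<Rightarrow> real \<Rightarrow> real \<Rightarrow> real \<Rightarrow> real" where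
  "F_map c \<gamma> cd cd' \<nu> x = 1 - \<gamma> - cd * \<nu> / (c * sqrt (x - cd' * \<nu>))"

end

theory Submission
  imports Defs
begin

lemma set_iid_list:
  "xs \<in> set_pmf (iid_list n P) \<Longrightarrow> length xs = n \<and> (\<forall>x\<in>set xs. x \<in> set_pmf P)"
  by (induction n arbitrary: xs) auto

lemma nn_integral_iid_list:
  assumes "\<And>x. r x \<ge> 0"
  shows "(\<integral>\<^sup>+xs. ennreal (prod_list (map r xs)) \<partial>iid_list n P) = (\<integral>\<^sup>+x. ennreal (r x) \<partial>P) ^ n"
proof (induction n)
  case 0 then show ?case by (simp add: prod_list_nonneg assms)
next
  case (Suc n)
  have nn: "\<And>xs. prod_list (map r xs) \<ge> 0" by (rule prod_list_nonneg) (auto simp: assms)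
  have "(\<integral>\<^sup>+xs. ennreal (prod_list (map r xs)) \<partial>iid_list (Suc n) P)
     = (\<integral>\<^sup>+x. \<integral>\<^sup>+xs. ennreal (r x) * ennreal (prod_list (map r xs)) \<partial>iid_list n P \<partial>P)"
    using nn assms by (simp add: ennreal_mult)
  also have "\<dots> = (\<integral>\<^sup>+x. ennreal (r x) * (\<integral>\<^sup>+xs. ennreal (prod_list (map r xs)) \<partial>iid_list n P) \<partial>P)"
    by (simp add: nn_integral_cmult)
  also have "\<dots> = (\<integral>\<^sup>+x. ennreal (r x) \<partial>P) * (\<integral>\<^sup>+x. ennreal (r x) \<partial>P) ^ n"
    by (simp add: Suc nn_integral_multc)
  finally show ?case by simp
qed

lemma markov_iid_list:
  fixes P :: "'x pmf"
  assumes "\<And>x. r x \<ge> 0" "(\<integral>\<^sup>+x. ennreal (r x) \<partial>P) \<le> ennreal b" "b \<ge> 0"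
  shows "measure_pmf.prob (iid_list n P) {xs. 1 \<le> prod_list (map r xs)} \<le> b ^ n"
proof -
  have "emeasure (iid_list n P) {xs. 1 \<le> prod_list (map r xs)}
      = (\<integral>\<^sup>+xs. indicator {xs. 1 \<le> prod_list (map r xs)} xs \<partial>iid_list n P)"
    by simp
  also have "\<dots> \<le> (\<integral>\<^sup>+xs. ennreal (prod_list (map r xs)) \<partial>iid_list n P)"
    by (intro nn_integral_mono) (auto split: split_indicator)
  also have "\<dots> = (\<integral>\<^sup>+x. ennreal (r x) \<partial>P) ^ n" by (rule nn_integral_iid_list[OF assms(1)])
  also have "\<dots> \<le> ennreal b ^ n" by (intro power_mono assms) simp
  also have "\<dots> = ennreal (b ^ n)" using assms by (simp add: ennreal_power)
  finally show ?thesis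
    using assms by (simp add: measure_pmf.emeasure_eq_measure ennreal_le_iff)
qed

definition ratio_fn :: "('q \<Rightarrow> 'a \<Rightarrow> bool) \<Rightarrow> ('q \<Rightarrow> 'a pmf) \<Rightarrow> ('q \<Rightarrow> 'a pmf) \<Rightarrow> 'q \<times> 'a \<Rightarrow> real" where
  "ratio_fn s \<pi> \<pi>' x = (case x of (q, a) \<Rightarrow> if s q a then pmf (\<pi>' q) a / pmf (filtered s \<pi> q) a else 1)"

definition Kval :: "'q pmf \<Rightarrow> ('q \<Rightarrow> 'a \<Rightarrow> bool) \<Rightarrow> ('q \<Rightarrow> 'a pmf) \<Rightarrow> ('q \<Rightarrow> 'a pmf) \<Rightarrow> real" where
  "Kval p0 s \<pi> \<pi>' = measure_pmf.expectation p0 (\<lambda>q. acc_rate s \<pi> q * (1 - acc_rate s \<pi>' q))"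

lemma ratio_fn_nonneg: "ratio_fn s \<pi> \<pi>' x \<ge> 0"
  by (auto simp: ratio_fn_def split: prod.splits)

lemma acc_rate_bounds: "0 \<le> acc_rate s \<pi> q" "acc_rate s \<pi> q \<le> 1"
  by (auto simp: acc_rate_def)

lemma nonempty_of_acc:
  assumes "acc_rate s \<pi> q > 0"
  shows "set_pmf (\<pi> q) \<inter> {a. s q a} \<noteq> {}"
  using assms measure_pmf_zero_iff[of "\<pi> q" "{a. s q a}"] by (auto simp: acc_rate_def)

lemma pmf_filtered:
  assumes "acc_rate s \<pi> q > 0"
  shows "pmf (filtered s \<pi> q) a = (if s q a then pmf (\<pi> q) a / acc_rate s \<pi> q else 0)"
  unfolding filtered_def using pmf_cond[OF nonempty_of_acc[OF assms]]
  by (simp add: acc_rate_def)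

lemma Kb: "0 \<le> acc_rate s \<pi> q * (1 - acc_rate s \<pi>' q) \<and> acc_rate s \<pi> q * (1 - acc_rate s \<pi>' q) \<le> 1"
proof -
  have "0 \<le> acc_rate s \<pi> q" "acc_rate s \<pi> q \<le> 1" "0 \<le> 1 - acc_rate s \<pi>' q" "1 - acc_rate s \<pi>' q \<le> 1"
    using acc_rate_bounds[of s \<pi> q] acc_rate_bounds[of s \<pi>' q] by auto
  then show ?thesis by (simp add: mult_le_one)
qed

lemma Kval_bounds: "0 \<le> Kval p0 s \<pi> \<pi>'" "Kval p0 s \<pi> \<pi>' \<le> 1"
proof -
  have b: "\<And>q. 0 \<le> acc_rate s \<pi> q * (1 - acc_rate s \<pi>' q) \<and> acc_rate s \<pi> q * (1 - acc_rate s \<pi>' q) \<le> 1"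
    by (rule Kb)
  show "0 \<le> Kval p0 s \<pi> \<pi>'" unfolding Kval_def using b by (intro integral_nonneg_AE) auto
  have "Kval p0 s \<pi> \<pi>' \<le> measure_pmf.expectation p0 (\<lambda>q. 1)" unfolding Kval_def
    using b by (intro integral_mono measure_pmf.integrable_const_bound[where B=1]) auto
  then show "Kval p0 s \<pi> \<pi>' \<le> 1" by simp
qed

lemma inner_bound:
  assumes pos: "acc_rate s \<pi> q > 0"
  shows "(\<integral>\<^sup>+a. ennreal (ratio_fn s \<pi> \<pi>' (q, a)) \<partial>\<pi> q)
     \<le> ennreal (1 - acc_rate s \<pi> q * (1 - acc_rate s \<pi>' q))"
proof -
  let ?\<alpha> = "acc_rate s \<pi> q" and ?\<beta> = "acc_rate s \<pi>' q"
  have "(\<integral>\<^sup>+a. ennreal (ratio_fn s \<pi> \<pi>' (q, a)) \<partial>\<pi> q)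
      = (\<integral>\<^sup>+a. ennreal (pmf (\<pi> q) a) * ennreal (ratio_fn s \<pi> \<pi>' (q, a)) \<partial>count_space UNIV)"
    by (rule nn_integral_measure_pmf)
  also have "\<dots> \<le> (\<integral>\<^sup>+a. ennreal (pmf (\<pi> q) a) * indicator {a. \<not> s q a} a
                      + ennreal ?\<alpha> * (ennreal (pmf (\<pi>' q) a) * indicator {a. s q a} a) \<partial>count_space UNIV)"
  proof (intro nn_integral_mono)
    fix a
    show "ennreal (pmf (\<pi> q) a) * ennreal (ratio_fn s \<pi> \<pi>' (q, a))
          \<le> ennreal (pmf (\<pi> q) a) * indicator {a. \<not> s q a} a
            + ennreal ?\<alpha> * (ennreal (pmf (\<pi>' q) a) * indicator {a. s q a} a)"
    proof (cases "s q a")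
      case False then show ?thesis by (simp add: ratio_fn_def)
    next
      case True
      show ?thesis
      proof (cases "pmf (\<pi> q) a = 0")
        case True then show ?thesis by simp
      next
        case False
        then have pp: "pmf (\<pi> q) a > 0" using pmf_nonneg[of "\<pi> q" a] by linarith
        have "pmf (\<pi> q) a * ratio_fn s \<pi> \<pi>' (q, a) = ?\<alpha> * pmf (\<pi>' q) a"
          using True pp pos by (simp add: ratio_fn_def pmf_filtered[OF pos])
        then show ?thesis using True pos
          by (simp add: ennreal_mult[symmetric] ratio_fn_nonneg)
      qed
    qed
  qed
  also have "\<dots> = (\<integral>\<^sup>+a. ennreal (pmf (\<pi> q) a) * indicator {a. \<not> s q a} a \<partial>count_space UNIV)
             + ennreal ?\<alpha> * (\<integral>\<^sup>+a. ennreal (pmf (\<pi>' q) a) * indicator {a. s q a} a \<partial>count_space UNIV)"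
    by (simp add: nn_integral_add nn_integral_cmult)
  also have "\<dots> = emeasure (\<pi> q) {a. \<not> s q a} + ennreal ?\<alpha> * emeasure (\<pi>' q) {a. s q a}"
    by (simp add: nn_integral_measure_pmf[symmetric] mult.commute)
  also have "\<dots> = ennreal (1 - ?\<alpha>) + ennreal ?\<alpha> * ennreal ?\<beta>"
  proof -
    have "measure_pmf.prob (\<pi> q) {a. \<not> s q a} = 1 - ?\<alpha>"
      unfolding acc_rate_def
      by (subst measure_pmf.prob_compl[symmetric]) (auto intro!: arg_cong[where f="measure_pmf.prob (\<pi> q)"])
    then show ?thesis by (simp add: measure_pmf.emeasure_eq_measure acc_rate_def)
  qed
  also have "\<dots> = ennreal (1 - ?\<alpha> * (1 - ?\<beta>))"
    using acc_rate_bounds[of s \<pi> q] acc_rate_bounds[of s \<pi>' q]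
    by (simp add: ennreal_mult[symmetric] ennreal_plus[symmetric] algebra_simps del: ennreal_plus)
  finally show ?thesis .
qed

lemma outer_bound:
  assumes pos: "\<forall>q. acc_rate s \<pi> q > 0"
  shows "(\<integral>\<^sup>+x. ennreal (ratio_fn s \<pi> \<pi>' x) \<partial>pair_dist p0 \<pi>) \<le> ennreal (1 - Kval p0 s \<pi> \<pi>')"
proof -
  let ?h = "\<lambda>q. 1 - acc_rate s \<pi> q * (1 - acc_rate s \<pi>' q)"
  have b: "\<And>q. 0 \<le> acc_rate s \<pi> q * (1 - acc_rate s \<pi>' q) \<and> acc_rate s \<pi> q * (1 - acc_rate s \<pi>' q) \<le> 1"
    by (rule Kb)
  have int: "integrable p0 (\<lambda>q. acc_rate s \<pi> q * (1 - acc_rate s \<pi>' q))"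
    using b by (intro measure_pmf.integrable_const_bound[where B=1]) auto
  have "(\<integral>\<^sup>+x. ennreal (ratio_fn s \<pi> \<pi>' x) \<partial>pair_dist p0 \<pi>)
       = (\<integral>\<^sup>+q. \<integral>\<^sup>+a. ennreal (ratio_fn s \<pi> \<pi>' (q, a)) \<partial>\<pi> q \<partial>p0)"
    by (simp add: pair_dist_def)
  also have "\<dots> \<le> (\<integral>\<^sup>+q. ennreal (?h q) \<partial>p0)"
    by (intro nn_integral_mono inner_bound pos[rule_format])
  also have "\<dots> = ennreal (measure_pmf.expectation p0 ?h)"
    using b int by (intro nn_integral_eq_integral) auto
  also have "measure_pmf.expectation p0 ?h = 1 - Kval p0 s \<pi> \<pi>'"
    unfolding Kval_def using int by (simp add: Bochner_Integration.integral_diff)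
  finally show ?thesis .
qed

lemma eln_sum_pos:
  fixes f :: "'x \<Rightarrow> real"
  shows
  "(\<forall>x\<in>set D. f x > 0) \<Longrightarrow> sum_list (map (\<lambda>x. eln (f x)) D) = ereal (sum_list (map (\<lambda>x. ln (f x)) D))"
  by (induction D) (auto simp: eln_def)

lemma eln_not_inf: "sum_list (map (\<lambda>x. eln (f x)) D) \<noteq> \<infinity>"
  by (induction D) (auto simp: eln_def)

lemma eln_sum_neg:
  fixes f :: "'x \<Rightarrow> real"
  shows
  "(\<exists>x\<in>set D. \<not> f x > 0) \<Longrightarrow> sum_list (map (\<lambda>x. eln (f x)) D) = -\<infinity>"
proof (induction D)
  case Nil then show ?case by simp
next
  case (Cons y D)
  show ?case
  proof (cases "f y > 0")
    case True
    then have "\<exists>x\<in>set D. \<not> f x > 0" using Cons.prems by auto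
    then show ?thesis using Cons.IH True by (simp add: eln_def)
  next
    case False
    then show ?thesis using eln_not_inf[of f D] by (simp add: eln_def)
  qed
qed

lemma prod_exp:
  fixes f h :: "'x \<Rightarrow> real"
  shows "(\<forall>x\<in>set D. f x > 0 \<and> h x > 0) \<Longrightarrow>
   prod_list (map (\<lambda>x. h x / f x) D) = exp (sum_list (map (\<lambda>x. ln (h x)) D) - sum_list (map (\<lambda>x. ln (f x)) D))"
proof (induction D)
  case Nil then show ?case by simp
next
  case (Cons a D)
  let ?A = "sum_list (map (\<lambda>x. ln (h x)) D)" and ?B = "sum_list (map (\<lambda>x. ln (f x)) D)"
  have p: "f a > 0" "h a > 0" using Cons.prems by auto
  have e: "ln (h a) + ?A - (ln (f a) + ?B) = (ln (h a) - ln (f a)) + (?A - ?B)" by simp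
  have "exp (ln (h a) + ?A - (ln (f a) + ?B)) = (h a / f a) * exp (?A - ?B)"
  proof -
    have "exp (ln (h a) + ?A - (ln (f a) + ?B)) = exp ((ln (h a) - ln (f a)) + (?A - ?B))"
      by (rule arg_cong[where f=exp]) simp
    also have "\<dots> = exp (ln (h a) - ln (f a)) * exp (?A - ?B)" by (simp only: exp_add)
    also have "exp (ln (h a) - ln (f a)) = h a / f a" by (simp add: exp_diff p)
    finally show ?thesis .
  qed
  then show ?case using Cons p by simp
qed

lemma loglik_prod:
  fixes f h :: "'x \<Rightarrow> real"
  assumes fpos: "\<forall>x\<in>set D. f x > 0" and hnn: "\<forall>x. h x \<ge> 0"
    and ineq: "ereal (1 / real (length D)) * sum_list (map (\<lambda>x. eln (h x)) D)
             \<ge> ereal (1 / real (length D)) * sum_list (map (\<lambda>x. eln (f x)) D)"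
  shows "1 \<le> prod_list (map (\<lambda>x. h x / f x) D)"
proof (cases "D = []")
  case True then show ?thesis by simp
next
  case False
  then have m: "1 / real (length D) > 0" by simp
  have F: "sum_list (map (\<lambda>x. eln (f x)) D) = ereal (sum_list (map (\<lambda>x. ln (f x)) D))"
    using fpos by (rule eln_sum_pos)
  show ?thesis
  proof (cases "\<forall>x\<in>set D. h x > 0")
    case True
    have H: "sum_list (map (\<lambda>x. eln (h x)) D) = ereal (sum_list (map (\<lambda>x. ln (h x)) D))"
      using True by (rule eln_sum_pos)
    have "(1 / real (length D)) * sum_list (map (\<lambda>x. ln (h x)) D)
        \<ge> (1 / real (length D)) * sum_list (map (\<lambda>x. ln (f x)) D)"
      using ineq unfolding F H by simp
    then have "sum_list (map (\<lambda>x. ln (h x)) D) \<ge> sum_list (map (\<lambda>x. ln (f x)) D)"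
      using m by (simp add: divide_le_cancel)
    then show ?thesis using prod_exp[of D f h] True fpos by simp
  next
    case False
    then have H: "sum_list (map (\<lambda>x. eln (h x)) D) = -\<infinity>" by (intro eln_sum_neg) auto
    have "ereal (1 / real (length D)) * (-\<infinity>) = -\<infinity>" using m by simp
    then show ?thesis using ineq unfolding F H by simp
  qed
qed

lemma set_pair_dist: "(q, a) \<in> set_pmf (pair_dist p0 \<pi>) \<Longrightarrow> a \<in> set_pmf (\<pi> q)"
  by (auto simp: pair_dist_def)

lemma ratio_prod_filter:
  "prod_list (map (ratio_fn s \<pi> \<pi>') xs)
   = prod_list (map (\<lambda>x. (case x of (q, a) \<Rightarrow> pmf (\<pi>' q) a) / (case x of (q, a) \<Rightarrow> pmf (filtered s \<pi> q) a))
                    (filter (\<lambda>(q, a). s q a) xs))"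
  by (induction xs) (auto simp: ratio_fn_def split: prod.splits)

lemma mle_prod:
  assumes pos: "\<forall>q. acc_rate s \<pi> q > 0" and mods: "filtered s \<pi> \<in> Mods"
    and mle: "is_mle_selector Mods mle"
    and xs: "\<forall>x\<in>set xs. x \<in> set_pmf (pair_dist p0 \<pi>)"
  shows "1 \<le> prod_list (map (ratio_fn s \<pi> (mle (filter (\<lambda>(q, a). s q a) xs))) xs)"
proof -
  define D where "D = filter (\<lambda>(q, a). s q a) xs"
  define \<pi>h where "\<pi>h = mle D"
  define f where "f = (\<lambda>x. case x of (q, a) \<Rightarrow> pmf (filtered s \<pi> q) a)"
  define h where "h = (\<lambda>x. case x of (q, a) \<Rightarrow> pmf (\<pi>h q) a)"
  have fpos: "\<forall>x\<in>set D. f x > 0"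
  proof
    fix x assume "x \<in> set D"
    then have x1: "x \<in> set xs" "case x of (q, a) \<Rightarrow> s q a" unfolding D_def by auto
    obtain q a where x0: "x = (q, a)" by (cases x)
    have x: "x = (q, a)" "s q a" "(q, a) \<in> set_pmf (pair_dist p0 \<pi>)"
      using x1 x0 xs by auto
    then have "pmf (\<pi> q) a > 0" using set_pair_dist by (metis set_pmf_eq' mem_Collect_eq)
    then show "f x > 0" using x pos by (simp add: f_def pmf_filtered)
  qed
  have hnn: "\<forall>x. h x \<ge> 0" by (auto simp: h_def split: prod.splits)
  have "avg_loglik (filtered s \<pi>) D \<le> avg_loglik \<pi>h D"
    using mle mods unfolding is_mle_selector_def \<pi>h_def by blast
  moreover have "\<And>\<rho>. (\<lambda>(q, a). eln (pmf (\<rho> q) a)) = (\<lambda>x. eln (case x of (q, a) \<Rightarrow> pmf (\<rho> q) a))"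
    by (auto simp: fun_eq_iff)
  ultimately have ineq: "ereal (1 / real (length D)) * sum_list (map (\<lambda>x. eln (h x)) D)
             \<ge> ereal (1 / real (length D)) * sum_list (map (\<lambda>x. eln (f x)) D)"
    unfolding avg_loglik_def f_def h_def by (simp add: case_prod_unfold)
  have "1 \<le> prod_list (map (\<lambda>x. h x / f x) D)" by (rule loglik_prod[OF fpos hnn ineq])
  then show ?thesis
    unfolding ratio_prod_filter D_def[symmetric] \<pi>h_def[symmetric] f_def h_def .
qed

lemma arith_final:
  fixes L nn V e c \<gamma> Eb :: real
  assumes L: "L > 0" and nn: "nn > 0" and Ve: "V > e" and e: "e \<ge> 0" and c: "0 < c" "c < 1" and g: "\<gamma> \<ge> 0"
    and Eb: "Eb \<ge> 1 - \<gamma> - L / (nn * c * V)" "Eb \<ge> 0"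
  shows "Eb \<ge> 1 - \<gamma> - sqrt (2 * L) * sqrt (1 / nn) / (c * sqrt (V - e))"
proof -
  define w where "w = L / (nn * V)"
  have V: "V > 0" using Ve e by linarith
  have w: "w > 0" using L nn V by (simp add: w_def)
  have eq: "L / (nn * c * V) = w / c" by (simp add: w_def field_simps)
  have s1: "sqrt (2 * L) * sqrt (1 / nn) = sqrt (2 * w) * sqrt V"
    using nn V by (simp add: w_def real_sqrt_mult[symmetric] field_simps)
  have sVe: "0 < sqrt (V - e)" "sqrt (V - e) \<le> sqrt V" using Ve e w by auto
  have key: "sqrt (2 * L) * sqrt (1 / nn) / sqrt (V - e) \<ge> sqrt (2 * w)"
  proof -
    have "sqrt (2 * w) * sqrt (V - e) \<le> sqrt (2 * w) * sqrt V"
      using sVe w by (intro mult_left_mono) auto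
    then show ?thesis using sVe s1 by (simp add: le_divide_eq)
  qed
  have T: "sqrt (2 * L) * sqrt (1 / nn) / (c * sqrt (V - e))
      = (sqrt (2 * L) * sqrt (1 / nn) / sqrt (V - e)) / c" by simp
  show ?thesis
  proof (cases "w \<le> 2")
    case True
    have "w * w \<le> 2 * w" using True w by (simp add: mult_right_mono)
    then have "w \<le> sqrt (2 * w)" using w by (simp add: real_le_rsqrt power2_eq_square)
    then have "w \<le> sqrt (2 * L) * sqrt (1 / nn) / sqrt (V - e)" using key by linarith
    then have "w / c \<le> (sqrt (2 * L) * sqrt (1 / nn) / sqrt (V - e)) / c"
      using c by (intro divide_right_mono) auto
    then have "w / c \<le> sqrt (2 * L) * sqrt (1 / nn) / (c * sqrt (V - e))"
      unfolding T .
    then show ?thesis using Eb eq by linarith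
  next
    case False
    then have "2 < sqrt (2 * w)" using real_less_rsqrt[of 2 "2*w"] by simp
    then have "2 < sqrt (2 * L) * sqrt (1 / nn) / sqrt (V - e)" using key by linarith
    then have "2 / c < (sqrt (2 * L) * sqrt (1 / nn) / sqrt (V - e)) / c"
      using c by (intro divide_strict_right_mono) auto
    then have "2 / c < sqrt (2 * L) * sqrt (1 / nn) / (c * sqrt (V - e))"
      unfolding T .
    moreover have "2 / c > 1" using c by simp
    ultimately show ?thesis using Eb g by linarith
  qed
qed

lemma integral_part:
  assumes V: "exp_reward s p0 \<pi> > 0" and c: "c > 0"
    and anti: "measure_pmf.prob p0 {q. acc_rate s \<pi> q < c * exp_reward s p0 \<pi>} \<le> \<gamma>"
  shows "exp_reward s p0 \<pi>' \<ge> 1 - \<gamma> - Kval p0 s \<pi> \<pi>' / (c * exp_reward s p0 \<pi>)"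
proof -
  define V where "V = exp_reward s p0 \<pi>"
  define B where "B = {q. acc_rate s \<pi> q < c * V}"
  let ?\<alpha> = "acc_rate s \<pi>" and ?\<beta> = "acc_rate s \<pi>'"
  have cV: "c * V > 0" using V c by (simp add: V_def)
  have pw: "1 - ?\<beta> q \<le> indicator B q + ?\<alpha> q * (1 - ?\<beta> q) / (c * V)" for q
  proof (cases "q \<in> B")
    case True
    have "0 \<le> ?\<alpha> q * (1 - ?\<beta> q) / (c * V)" using Kb[of s \<pi> q \<pi>'] cV by simp
    then show ?thesis using True acc_rate_bounds[of s \<pi>' q] by simp
  next
    case False
    then have a: "?\<alpha> q \<ge> c * V" by (simp add: B_def)
    have "1 - ?\<beta> q = (c * V) * (1 - ?\<beta> q) / (c * V)" using cV by (simp only: nonzero_mult_div_cancel_left less_irrefl)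
    also have "\<dots> \<le> ?\<alpha> q * (1 - ?\<beta> q) / (c * V)"
      using a cV acc_rate_bounds[of s \<pi>' q] by (intro divide_right_mono mult_right_mono) auto
    finally show ?thesis using False by simp
  qed
  have ib: "integrable p0 ?\<beta>"
    by (intro measure_pmf.integrable_const_bound[where B=1]) (auto simp: acc_rate_def)
  have ik: "integrable p0 (\<lambda>q. ?\<alpha> q * (1 - ?\<beta> q))"
    using Kb[of s \<pi> _ \<pi>'] by (intro measure_pmf.integrable_const_bound[where B=1]) auto
  have ii: "integrable p0 (indicator B :: 'a \<Rightarrow> real)"
    by (intro measure_pmf.integrable_const_bound[where B=1]) (auto split: split_indicator)
  have "measure_pmf.expectation p0 (\<lambda>q. 1 - ?\<beta> q)
      \<le> measure_pmf.expectation p0 (\<lambda>q. indicator B q + ?\<alpha> q * (1 - ?\<beta> q) / (c * V))"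
    using ib ik ii pw by (intro integral_mono) auto
  also have "\<dots> = measure_pmf.prob p0 B + Kval p0 s \<pi> \<pi>' / (c * V)"
    using ik ii by (simp add: Bochner_Integration.integral_add Kval_def)
  finally have "1 - exp_reward s p0 \<pi>' \<le> measure_pmf.prob p0 B + Kval p0 s \<pi> \<pi>' / (c * V)"
    using ib by (simp add: Bochner_Integration.integral_diff exp_reward_def)
  then show ?thesis using anti unfolding B_def V_def by linarith
qed

lemma prob_ge_compl:
  fixes M :: "'x pmf"
  assumes "set_pmf M - Bad \<subseteq> G"
  shows "measure_pmf.prob M G \<ge> 1 - measure_pmf.prob M Bad"
proof -
  have "measure_pmf.prob M (UNIV - Bad) \<le> measure_pmf.prob M (G \<union> (UNIV - set_pmf M))"
    using assms by (intro measure_pmf.finite_measure_mono) auto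
  also have "\<dots> \<le> measure_pmf.prob M G + measure_pmf.prob M (UNIV - set_pmf M)"
    by (rule measure_Un_le) auto
  also have "measure_pmf.prob M (UNIV - set_pmf M) = 0"
    by (simp add: measure_pmf_zero_iff)
  finally show ?thesis using measure_pmf.prob_compl[of Bad M] by simp
qed

lemma step_bound:
  fixes p0 :: "'q pmf" and \<pi> :: "'q \<Rightarrow> 'a pmf"
  assumes fin: "finite Mods" and n: "n > 0" and mle: "is_mle_selector Mods mle"
    and pos: "\<forall>q. acc_rate s \<pi> q > 0" and mods: "filtered s \<pi> \<in> Mods"
    and c: "0 < c" "c < 1" and g: "\<gamma> \<ge> 0"
    and anti: "measure_pmf.prob p0 {q. acc_rate s \<pi> q < c * exp_reward s p0 \<pi>} \<le> \<gamma>"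
    and \<delta>: "0 < \<delta>" "\<delta> < 1" and \<delta>': "0 < \<delta>'" "\<delta>' < 1"
    and V: "exp_reward s p0 \<pi> > c_delta' \<delta>' * nu n"
  shows "measure_pmf.prob (si_step p0 s n mle \<pi>)
           {\<theta>'. exp_reward s p0 \<theta>' \<ge> F_map c \<gamma> (c_delta (card Mods) \<delta>) (c_delta' \<delta>') (nu n) (exp_reward s p0 \<pi>)}
         \<ge> 1 - \<delta> - \<delta>'"
proof -
  define N where "N = card Mods"
  define L where "L = ln (real N / \<delta>)"
  define P where "P = pair_dist p0 \<pi>"
  define e where "e = c_delta' \<delta>' * nu n"
  define VV where "VV = exp_reward s p0 \<pi>"
  define BadM where "BadM = {\<pi>' \<in> Mods. Kval p0 s \<pi> \<pi>' > L / real n}"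
  define Bad where "Bad = (\<Union>\<pi>'\<in>BadM. {xs. 1 \<le> prod_list (map (ratio_fn s \<pi> \<pi>') xs)})"
  have "mle [] \<in> Mods" using mle by (simp add: is_mle_selector_def)
  then have N1: "N \<ge> 1" using fin unfolding N_def
    by (metis One_nat_def Suc_leI card_gt_0_iff empty_iff)
  have L: "L > 0" unfolding L_def using N1 \<delta> by (simp add: ln_gt_zero)
  have expL: "exp (- L) = \<delta> / real N" unfolding L_def using N1 \<delta> by (simp add: exp_minus exp_ln)
  have e0: "e \<ge> 0" unfolding e_def c_delta'_def nu_def using \<delta>' by (simp add: ln_ge_zero)
  have eachbad: "measure_pmf.prob (iid_list n P) {xs. 1 \<le> prod_list (map (ratio_fn s \<pi> \<pi>') xs)} \<le> \<delta> / real N"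
    if "\<pi>' \<in> BadM" for \<pi>'
  proof -
    let ?K = "Kval p0 s \<pi> \<pi>'"
    have K: "?K > L / real n" using that by (simp add: BadM_def)
    have "measure_pmf.prob (iid_list n P) {xs. 1 \<le> prod_list (map (ratio_fn s \<pi> \<pi>') xs)} \<le> (1 - ?K) ^ n"
      using Kval_bounds[of p0 s \<pi> \<pi>'] outer_bound[OF pos, of p0 \<pi>']
      by (intro markov_iid_list) (auto simp: ratio_fn_nonneg P_def)
    also have "\<dots> \<le> exp (- ?K) ^ n"
      using Kval_bounds[of p0 s \<pi> \<pi>'] by (intro power_mono) (auto simp: exp_ge_add_one_self[of "- ?K", simplified])
    also have "\<dots> = exp (- (real n * ?K))" by (simp add: exp_of_nat_mult[symmetric])
    also have "\<dots> \<le> exp (- L)"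
      using K n by (simp add: divide_less_eq mult.commute)
    finally show ?thesis using expL by simp
  qed
  have probBad: "measure_pmf.prob (iid_list n P) Bad \<le> \<delta>"
  proof -
    have "measure_pmf.prob (iid_list n P) Bad
        \<le> (\<Sum>\<pi>'\<in>BadM. measure_pmf.prob (iid_list n P) {xs. 1 \<le> prod_list (map (ratio_fn s \<pi> \<pi>') xs)})"
      unfolding Bad_def using fin by (intro measure_pmf.finite_measure_subadditive_finite) (auto simp: BadM_def)
    also have "\<dots> \<le> (\<Sum>\<pi>'\<in>BadM. \<delta> / real N)" by (intro sum_mono eachbad)
    also have "\<dots> = real (card BadM) * (\<delta> / real N)" by simp
    also have "\<dots> \<le> real N * (\<delta> / real N)"
      using fin \<delta> unfolding N_def BadM_def by (intro mult_right_mono) (auto intro: card_mono)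
    also have "\<dots> = \<delta>" using N1 by simp
    finally show ?thesis .
  qed
  have good: "set_pmf (iid_list n P) - Bad \<subseteq>
      (\<lambda>D. mle (filter (\<lambda>(q, a). s q a) D)) -`
        {\<theta>'. exp_reward s p0 \<theta>' \<ge> F_map c \<gamma> (c_delta (card Mods) \<delta>) (c_delta' \<delta>') (nu n) (exp_reward s p0 \<pi>)}"
  proof
    fix xs assume xs: "xs \<in> set_pmf (iid_list n P) - Bad"
    define \<pi>h where "\<pi>h = mle (filter (\<lambda>(q, a). s q a) xs)"
    have hM: "\<pi>h \<in> Mods" using mle by (simp add: is_mle_selector_def \<pi>h_def)
    have "1 \<le> prod_list (map (ratio_fn s \<pi> \<pi>h) xs)"
      unfolding \<pi>h_def using xs set_iid_list[of xs n P] by (intro mle_prod[OF pos mods mle]) (auto simp: P_def)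
    then have "\<pi>h \<notin> BadM" using xs by (auto simp: Bad_def)
    then have Kh: "Kval p0 s \<pi> \<pi>h \<le> L / real n" using hM by (simp add: BadM_def not_less)
    have VVpos: "VV > 0" using V e0 unfolding VV_def e_def by linarith
    have "exp_reward s p0 \<pi>h \<ge> 1 - \<gamma> - Kval p0 s \<pi> \<pi>h / (c * VV)"
      unfolding VV_def using VVpos c anti by (intro integral_part) (auto simp: VV_def)
    moreover have "Kval p0 s \<pi> \<pi>h / (c * VV) \<le> L / (real n * c * VV)"
      using Kh VVpos c by (simp add: divide_right_mono field_simps)
    ultimately have Eb: "exp_reward s p0 \<pi>h \<ge> 1 - \<gamma> - L / (real n * c * VV)" by linarith
    have Eb0: "exp_reward s p0 \<pi>h \<ge> 0"
      unfolding exp_reward_def by (intro integral_nonneg_AE) (auto simp: acc_rate_def)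
    have "exp_reward s p0 \<pi>h \<ge> 1 - \<gamma> - sqrt (2 * L) * sqrt (1 / real n) / (c * sqrt (VV - e))"
      using V unfolding VV_def[symmetric] e_def[symmetric]
      by (intro arith_final[OF L _ _ e0 c g Eb Eb0]) (use n in auto)
    then show "xs \<in> (\<lambda>D. mle (filter (\<lambda>(q, a). s q a) D)) -`
        {\<theta>'. exp_reward s p0 \<theta>' \<ge> F_map c \<gamma> (c_delta (card Mods) \<delta>) (c_delta' \<delta>') (nu n) (exp_reward s p0 \<pi>)}"
      unfolding \<pi>h_def F_map_def c_delta_def nu_def VV_def e_def L_def N_def
      by (simp add: nu_def)
  qed
  have "measure_pmf.prob (si_step p0 s n mle \<pi>)
           {\<theta>'. exp_reward s p0 \<theta>' \<ge> F_map c \<gamma> (c_delta (card Mods) \<delta>) (c_delta' \<delta>') (nu n) (exp_reward s p0 \<pi>)}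
     = measure_pmf.prob (iid_list n P) ((\<lambda>D. mle (filter (\<lambda>(q, a). s q a) D)) -`
        {\<theta>'. exp_reward s p0 \<theta>' \<ge> F_map c \<gamma> (c_delta (card Mods) \<delta>) (c_delta' \<delta>') (nu n) (exp_reward s p0 \<pi>)})"
    by (simp add: si_step_def P_def)
  also have "\<dots> \<ge> 1 - measure_pmf.prob (iid_list n P) Bad" by (rule prob_ge_compl[OF good])
  finally show ?thesis using probBad \<delta>' by linarith
qed

lemma measure_bind_pmf_real:
  "measure_pmf.prob (bind_pmf M N) X = measure_pmf.expectation M (\<lambda>x. measure_pmf.prob (N x) X)"
proof -
  have i: "integrable M (\<lambda>x. measure_pmf.prob (N x) X)"
    by (intro measure_pmf.integrable_const_bound[where B=1]) auto
  have "ennreal (measure_pmf.prob (bind_pmf M N) X) = emeasure (bind_pmf M N) X"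
    by (simp add: measure_pmf.emeasure_eq_measure)
  also have "\<dots> = (\<integral>\<^sup>+x. ennreal (measure_pmf.prob (N x) X) \<partial>M)"
    by (subst emeasure_bind_pmf) (simp add: measure_pmf.emeasure_eq_measure)
  also have "\<dots> = ennreal (measure_pmf.expectation M (\<lambda>x. measure_pmf.prob (N x) X))"
    using i by (intro nn_integral_eq_integral) auto
  finally show ?thesis
    by (subst (asm) ennreal_inj) (auto intro: integral_nonneg_AE)
qed

lemma F_mono:
  assumes "cd \<ge> 0" "\<nu> \<ge> 0" "c > 0" "y > cd' * \<nu>" "x \<ge> y"
  shows "F_map c \<gamma> cd cd' \<nu> x \<ge> F_map c \<gamma> cd cd' \<nu> y"
proof -
  have "0 < c * sqrt (y - cd' * \<nu>)" using assms by simp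
  moreover have "c * sqrt (y - cd' * \<nu>) \<le> c * sqrt (x - cd' * \<nu>)" using assms by simp
  ultimately have "cd * \<nu> / (c * sqrt (x - cd' * \<nu>)) \<le> cd * \<nu> / (c * sqrt (y - cd' * \<nu>))"
    using assms by (intro divide_left_mono) auto
  then show ?thesis unfolding F_map_def by linarith
qed

theorem corollary4p4:
  fixes p0 :: "'q pmf"
    and s :: "'q \<Rightarrow> 'a \<Rightarrow> bool"
    and Mods :: "('q \<Rightarrow> 'a pmf) set"
    and Theta :: "('q \<Rightarrow> 'a pmf) set"
    and mle :: "('q \<times> 'a) list \<Rightarrow> ('q \<Rightarrow> 'a pmf)"
    and \<theta>0 :: "'q \<Rightarrow> 'a pmf"
    and n :: nat and c \<gamma> \<delta> \<delta>' :: real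
  defines "R \<equiv> reachable p0 s n mle \<theta>0"
    and "F \<equiv> F_map c \<gamma> (c_delta (card Mods) \<delta>) (c_delta' \<delta>') (nu n)"
    and "V \<equiv> exp_reward s p0"
  assumes fin: "finite Mods"
    and n_pos: "n > 0"
    and mle: "is_mle_selector Mods mle"
    and alpha_pos: "\<forall>\<theta>\<in>R. \<forall>q. acc_rate s \<theta> q > 0"
    and realizable: "\<forall>\<theta>\<in>R. filtered s \<theta> \<in> Mods"
    and in_Theta: "R \<subseteq> Theta"
    and c: "0 < c" "c < 1" and \<gamma>: "\<gamma> \<ge> 0"
    and anti_conc: "\<forall>p :: 'q pmf. \<forall>\<theta>\<in>Theta.
                      measure_pmf.prob p {q. acc_rate s \<theta> q < c * exp_reward s p \<theta>} \<le> \<gamma>"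
    and \<delta>: "0 < \<delta>" "\<delta> < 1" and \<delta>': "0 < \<delta>'" "\<delta>' < 1"
  shows "(\<forall>t. \<forall>\<theta>\<in>set_pmf (si_iter p0 s n mle \<theta>0 t).
            V \<theta> > c_delta' \<delta>' * nu n \<longrightarrow>
            measure_pmf.prob (si_step p0 s n mle \<theta>) {\<theta>'. V \<theta>' \<ge> F (V \<theta>)} \<ge> 1 - \<delta> - \<delta>')
       \<and> (\<forall>t. (\<forall>k<t. (F ^^ k) (V \<theta>0) > c_delta' \<delta>' * nu n) \<longrightarrow>
            measure_pmf.prob (si_iter p0 s n mle \<theta>0 t) {\<theta>. V \<theta> \<ge> (F ^^ t) (V \<theta>0)}
              \<ge> 1 - real t * (\<delta> + \<delta>'))"
proof -
  define e where "e = c_delta' \<delta>' * nu n"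
  have inR: "\<theta> \<in> R" if "\<theta> \<in> set_pmf (si_iter p0 s n mle \<theta>0 t)" for \<theta> t
    using that unfolding R_def reachable_def by blast
  have step: "measure_pmf.prob (si_step p0 s n mle \<theta>) {\<theta>'. V \<theta>' \<ge> F (V \<theta>)} \<ge> 1 - \<delta> - \<delta>'"
    if "\<theta> \<in> R" "V \<theta> > e" for \<theta>
  proof -
    have "\<theta> \<in> Theta" using that in_Theta by blast
    then have anti: "measure_pmf.prob p0 {q. acc_rate s \<theta> q < c * exp_reward s p0 \<theta>} \<le> \<gamma>"
      using anti_conc by blast
    show ?thesis unfolding V_def F_def
      by (rule step_bound[OF fin n_pos mle _ _ c \<gamma> anti \<delta> \<delta>'])
         (use that alpha_pos realizable in \<open>auto simp: V_def e_def\<close>)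
  qed
  have cd: "c_delta (card Mods) \<delta> \<ge> 0" unfolding c_delta_def
  proof -
    have "mle [] \<in> Mods" using mle by (simp add: is_mle_selector_def)
    then have "card Mods \<ge> 1" using fin by (metis One_nat_def Suc_leI card_gt_0_iff empty_iff)
    then have "real (card Mods) / \<delta> \<ge> 1" using \<delta> by simp
    then show "0 \<le> sqrt (2 * ln (real (card Mods) / \<delta>))" by simp
  qed
  have nu: "nu n \<ge> 0" by (simp add: nu_def)
  have Fmono: "F x \<ge> F y" if "y > e" "x \<ge> y" for x y
    unfolding F_def using that cd nu c by (intro F_mono) (auto simp: e_def)
  show ?thesis
  proof (intro conjI allI ballI impI)
    fix t \<theta> assume "\<theta> \<in> set_pmf (si_iter p0 s n mle \<theta>0 t)" "V \<theta> > c_delta' \<delta>' * nu n"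
    then show "measure_pmf.prob (si_step p0 s n mle \<theta>) {\<theta>'. V \<theta>' \<ge> F (V \<theta>)} \<ge> 1 - \<delta> - \<delta>'"
      using step inR e_def by blast
  next
    fix t
    show "(\<forall>k<t. (F ^^ k) (V \<theta>0) > c_delta' \<delta>' * nu n) \<Longrightarrow>
            measure_pmf.prob (si_iter p0 s n mle \<theta>0 t) {\<theta>. V \<theta> \<ge> (F ^^ t) (V \<theta>0)}
              \<ge> 1 - real t * (\<delta> + \<delta>')"
    proof (induction t)
      case 0
      then show ?case by simp
    next
      case (Suc t)
      let ?M = "si_iter p0 s n mle \<theta>0 t"
      let ?S = "{\<theta>. V \<theta> \<ge> (F ^^ t) (V \<theta>0)}"
      let ?S' = "{\<theta>. V \<theta> \<ge> (F ^^ Suc t) (V \<theta>0)}"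
      have IH: "measure_pmf.prob ?M ?S \<ge> 1 - real t * (\<delta> + \<delta>')" using Suc by auto
      have ht: "(F ^^ t) (V \<theta>0) > e" using Suc.prems e_def by auto
      have pw: "measure_pmf.prob (si_step p0 s n mle \<theta>) ?S' \<ge> indicator ?S \<theta> - (\<delta> + \<delta>')"
        if "\<theta> \<in> set_pmf ?M" for \<theta>
      proof (cases "\<theta> \<in> ?S")
        case True
        then have Vt: "V \<theta> \<ge> (F ^^ t) (V \<theta>0)" by simp
        then have "V \<theta> > e" using ht by linarith
        then have "measure_pmf.prob (si_step p0 s n mle \<theta>) {\<theta>'. V \<theta>' \<ge> F (V \<theta>)} \<ge> 1 - \<delta> - \<delta>'"
          using step inR[OF that] by blast
        moreover have "F (V \<theta>) \<ge> (F ^^ Suc t) (V \<theta>0)" using Fmono[OF ht Vt] by simp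
        then have "{\<theta>'. V \<theta>' \<ge> F (V \<theta>)} \<subseteq> ?S'" by auto
        then have "measure_pmf.prob (si_step p0 s n mle \<theta>) {\<theta>'. V \<theta>' \<ge> F (V \<theta>)}
                   \<le> measure_pmf.prob (si_step p0 s n mle \<theta>) ?S'"
          by (intro measure_pmf.finite_measure_mono) auto
        ultimately show ?thesis using True by simp
      next
        case False
        have "measure_pmf.prob (si_step p0 s n mle \<theta>) ?S' \<ge> 0" by simp
        moreover have "indicator ?S \<theta> = (0::real)" using False by simp
        ultimately show ?thesis using \<delta> \<delta>' by linarith
      qed
      have "measure_pmf.prob (si_iter p0 s n mle \<theta>0 (Suc t)) ?S'
          = measure_pmf.expectation ?M (\<lambda>\<theta>. measure_pmf.prob (si_step p0 s n mle \<theta>) ?S')"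
        by (simp add: measure_bind_pmf_real)
      also have "\<dots> \<ge> measure_pmf.expectation ?M (\<lambda>\<theta>. indicator ?S \<theta> - (\<delta> + \<delta>'))"
        using pw
        by (intro integral_mono_AE measure_pmf.integrable_const_bound[where B=1]
                  measure_pmf.integrable_const_bound[where B="1 + \<bar>\<delta> + \<delta>'\<bar>"])
           (auto simp: AE_measure_pmf_iff split: split_indicator)
      also have "measure_pmf.expectation ?M (\<lambda>\<theta>. indicator ?S \<theta> - (\<delta> + \<delta>'))
               = measure_pmf.prob ?M ?S - (\<delta> + \<delta>')"
        by (subst Bochner_Integration.integral_diff)
           (auto intro!: measure_pmf.integrable_const_bound[where B=1] split: split_indicator)
      finally show ?case using IH by (simp add: algebra_simps)
    qed
  qed
qed

end
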